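(* Let $k\ge d$, let $\mathbf{W}^*\in\mathbb{R}^{k\times d}$ with $\sigma_{\min}(\mathbf{W}^* )>0$, and let $\mathbf{v}^*\in\mathbb{R}^k$ have all its nonzero entries of the same sign. Let labels be generated as $y_i=\langle \mathbf{v}^*,\phi(\mathbf{W}^*\mathbf{x}_i)\rangle$ with $\phi(z)=z^2$ applied entrywise. Fix $\mathbf{v}\in\mathbb{R}^k$ whose nonzero entries all have that same sign and which has at least $d$ nonzero entries. Consider $$\mathcal{L}(\mathbf{W})=\frac{1}{2n}\sum_{i=1}^n\big(y_i-\mathbf{v}^T\phi(\mathbf{W}\mathbf{x}_i)\big)^2,\qquad \mathbf{W}\in\mathbb{R}^{k\times d}.$$ There is a numerical constant $c>0$ such that if $d\le n\le c d^2$, then for Lebesgue-almost every choice of inputs $(\mathbf{x}_1,\dots,\mathbf{x}_n)\in(\mathbb{R}^d)^n$: (i) all local minima of $\mathcal{L}$ are global minima; (ii) at every saddle point $\mathbf{W}_s$ there is $\mathbf{U}\in\mathbb{R}^{k\times d}$ with $\mathrm{vect}(\mathbf{U})^T\nabla^2\mathcal{L}(\mathbf{W}_s)\mathrm{vect}(\mathbf{U})<0$; (iii) the global minimum value of $\mathcal{L}$ is $0$.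
   Context: $\mathrm{vect}(\mathbf{U})$ denotes the vectorization of $\mathbf{U}$ and $\nabla^2\mathcal{L}$ the Hessian with respect to $\mathrm{vect}(\mathbf{W})$. $\sigma_{\min}$ denotes the smallest singular value. *)

theory Defs
  imports "HOL-Analysis.Analysis"
begin

text \<open>Matrices in R^(k x d) are represented as functions nat => nat => real,
  with entries (r,j) for r < k, j < d, and zero outside that index range.\<close>

definition matr :: "nat \<Rightarrow> nat \<Rightarrow> (nat \<Rightarrow> nat \<Rightarrow> real) set" where
  "matr k d = {W. \<forall>r j. (k \<le> r \<or> d \<le> j) \<longrightarrow> W r j = 0}"

definition frob2 :: "nat \<Rightarrow> nat \<Rightarrow> (nat \<Rightarrow> nat \<Rightarrow> real) \<Rightarrow> real" where
  "frob2 k d W = (\<Sum>r<k. \<Sum>j<d. (W r j)^2)"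

definition sigma_min :: "nat \<Rightarrow> nat \<Rightarrow> (nat \<Rightarrow> nat \<Rightarrow> real) \<Rightarrow> real" where
  "sigma_min k d W = Inf {sqrt (\<Sum>r<k. (\<Sum>j<d. W r j * x j)^2) | x.
       (\<Sum>j<d. (x j)^2) = 1}"

text \<open>Inputs: X (i,j) is the j-th coordinate of x_i (i < n, j < d).
  Labels y_i = <v*, phi(W* x_i)> with phi(z) = z^2 entrywise.\<close>
definition label :: "nat \<Rightarrow> nat \<Rightarrow> (nat \<Rightarrow> real) \<Rightarrow> (nat \<Rightarrow> nat \<Rightarrow> real)
     \<Rightarrow> (nat \<times> nat \<Rightarrow> real) \<Rightarrow> nat \<Rightarrow> real" where
  "label k d vs Ws X i = (\<Sum>r<k. vs r * (\<Sum>j<d. Ws r j * X (i, j))^2)"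

definition loss :: "nat \<Rightarrow> nat \<Rightarrow> nat \<Rightarrow> (nat \<Rightarrow> real) \<Rightarrow> (nat \<Rightarrow> nat \<Rightarrow> real)
     \<Rightarrow> (nat \<Rightarrow> real) \<Rightarrow> (nat \<times> nat \<Rightarrow> real) \<Rightarrow> (nat \<Rightarrow> nat \<Rightarrow> real) \<Rightarrow> real" where
  "loss k d n vs Ws v X W =
     1 / (2 * real n) * (\<Sum>i<n. (label k d vs Ws X i
        - (\<Sum>r<k. v r * (\<Sum>j<d. W r j * X (i, j))^2))^2)"

definition is_local_min :: "nat \<Rightarrow> nat \<Rightarrow> ((nat \<Rightarrow> nat \<Rightarrow> real) \<Rightarrow> real)
     \<Rightarrow> (nat \<Rightarrow> nat \<Rightarrow> real) \<Rightarrow> bool" where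
  "is_local_min k d f W \<longleftrightarrow> W \<in> matr k d \<and>
     (\<exists>e>0. \<forall>W'\<in>matr k d. frob2 k d (\<lambda>r j. W' r j - W r j) < e\<^sup>2 \<longrightarrow> f W \<le> f W')"

definition is_local_max :: "nat \<Rightarrow> nat \<Rightarrow> ((nat \<Rightarrow> nat \<Rightarrow> real) \<Rightarrow> real)
     \<Rightarrow> (nat \<Rightarrow> nat \<Rightarrow> real) \<Rightarrow> bool" where
  "is_local_max k d f W \<longleftrightarrow> W \<in> matr k d \<and>
     (\<exists>e>0. \<forall>W'\<in>matr k d. frob2 k d (\<lambda>r j. W' r j - W r j) < e\<^sup>2 \<longrightarrow> f W' \<le> f W)"

definition is_global_min :: "nat \<Rightarrow> nat \<Rightarrow> ((nat \<Rightarrow> nat \<Rightarrow> real) \<Rightarrow> real)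
     \<Rightarrow> (nat \<Rightarrow> nat \<Rightarrow> real) \<Rightarrow> bool" where
  "is_global_min k d f W \<longleftrightarrow> W \<in> matr k d \<and> (\<forall>W'\<in>matr k d. f W \<le> f W')"

definition partial :: "((nat \<Rightarrow> nat \<Rightarrow> real) \<Rightarrow> real) \<Rightarrow> nat \<Rightarrow> nat
     \<Rightarrow> (nat \<Rightarrow> nat \<Rightarrow> real) \<Rightarrow> real" where
  "partial f a b W = deriv (\<lambda>t. f (W(a := (W a)(b := t)))) (W a b)"

definition hess :: "((nat \<Rightarrow> nat \<Rightarrow> real) \<Rightarrow> real) \<Rightarrow> nat \<Rightarrow> nat \<Rightarrow> nat \<Rightarrow> nat
     \<Rightarrow> (nat \<Rightarrow> nat \<Rightarrow> real) \<Rightarrow> real" where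
  "hess f a b c e W = partial (\<lambda>W'. partial f a b W') c e W"

definition hess_form :: "nat \<Rightarrow> nat \<Rightarrow> ((nat \<Rightarrow> nat \<Rightarrow> real) \<Rightarrow> real)
     \<Rightarrow> (nat \<Rightarrow> nat \<Rightarrow> real) \<Rightarrow> (nat \<Rightarrow> nat \<Rightarrow> real) \<Rightarrow> real" where
  "hess_form k d f W U =
     (\<Sum>a<k. \<Sum>b<d. \<Sum>c<k. \<Sum>e<d. U a b * hess f a b c e W * U c e)"

definition is_stationary :: "nat \<Rightarrow> nat \<Rightarrow> ((nat \<Rightarrow> nat \<Rightarrow> real) \<Rightarrow> real)
     \<Rightarrow> (nat \<Rightarrow> nat \<Rightarrow> real) \<Rightarrow> bool" where
  "is_stationary k d f W \<longleftrightarrow> W \<in> matr k d \<and> (\<forall>a<k. \<forall>b<d. partial f a b W = 0)"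

definition is_saddle :: "nat \<Rightarrow> nat \<Rightarrow> ((nat \<Rightarrow> nat \<Rightarrow> real) \<Rightarrow> real)
     \<Rightarrow> (nat \<Rightarrow> nat \<Rightarrow> real) \<Rightarrow> bool" where
  "is_saddle k d f W \<longleftrightarrow> is_stationary k d f W \<and>
     \<not> is_local_min k d f W \<and> \<not> is_local_max k d f W"

end

theory Submission
  imports Defs
begin


locale LS = fixes k d n :: nat and vs :: "nat \<Rightarrow> real" and Ws :: "nat\<Rightarrow>nat\<Rightarrow>real"
  and v :: "nat \<Rightarrow> real" and X :: "nat\<times>nat\<Rightarrow>real"
begin

definition "C = 1/(2*real n)"
definition "y i = label k d vs Ws X i"
definition "p W r i = (\<Sum>j<d. W r j * X(i,j))"
definition "q W i = (\<Sum>r<k. v r * (p W r i)^2)"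
definition "res W i = q W i - y i"
abbreviation "L \<equiv> loss k d n vs Ws v X"

lemma L_eq: "L W = C * (\<Sum>i<n. (res W i)^2)"
  by (simp add: loss_def C_def res_def q_def p_def y_def power2_commute)

lemma p_upd: assumes "b < d"
  shows "p (W(a := (W a)(b := t))) r i = p W r i + (if r = a then (t - W a b) * X(i,b) else 0)"
proof (cases "r = a")
  case True
  have "\<And>j. ((W a)(b:=t)) j * X(i,j) = W a j * X(i,j) + (if j = b then (t - W a b) * X(i,b) else 0)"
    by (auto simp: algebra_simps)
  then show ?thesis using True assms by (simp add: p_def sum.distrib)
next
  case False then show ?thesis by (simp add: p_def)
qed

lemma dp: assumes "b<d"
  shows "((\<lambda>t. p (W(a := (W a)(b := t))) r i) has_real_derivative (if r = a then X(i,b) else 0)) (at t0)"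
  unfolding p_upd[OF assms] by (cases "r=a") (auto intro!: derivative_eq_intros)

lemma dq: assumes "b<d"
  shows "((\<lambda>t. q (W(a := (W a)(b := t))) i) has_real_derivative
     (if a < k then 2 * v a * p (W(a := (W a)(b := t0))) a i * X(i,b) else 0)) (at t0)"
proof -
  have "((\<lambda>t. q (W(a := (W a)(b := t))) i) has_real_derivative
     (\<Sum>r<k. v r * (of_nat 2 * ((if r = a then X(i,b) else 0) * p (W(a := (W a)(b := t0))) r i ^ (2 - Suc 0))))) (at t0)"
    unfolding q_def by (intro DERIV_sum DERIV_cmult) (rule DERIV_power[OF dp[OF assms]])
  moreover have "(\<Sum>r<k. v r * (of_nat 2 * ((if r = a then X(i,b) else 0) * p (W(a := (W a)(b := t0))) r i ^ (2 - Suc 0))))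
     = (\<Sum>r<k. if r = a then 2 * v a * p (W(a := (W a)(b := t0))) a i * X(i,b) else 0)"
    by (intro sum.cong) auto
  ultimately show ?thesis by simp
qed

lemma dL: assumes "b<d"
  shows "((\<lambda>t. L (W(a := (W a)(b := t)))) has_real_derivative
     C * (\<Sum>i<n. 2 * res (W(a := (W a)(b := t0))) i * (if a < k then 2 * v a * p (W(a := (W a)(b := t0))) a i * X(i,b) else 0))) (at t0)"
proof -
  have "((\<lambda>t. L (W(a := (W a)(b := t)))) has_real_derivative
     C * (\<Sum>i<n. of_nat 2 * (((if a < k then 2 * v a * p (W(a := (W a)(b := t0))) a i * X(i,b) else 0) - 0) * (q (W(a := (W a)(b := t0))) i - y i) ^ (2 - Suc 0)))) (at t0)"
    unfolding L_eq res_def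
    by (intro DERIV_cmult DERIV_sum DERIV_power DERIV_diff dq assms DERIV_const)
  then show ?thesis by (rule DERIV_cong) (auto simp: res_def intro!: sum.cong)
qed

definition "G W a b = (if a < k then 4 * C * v a * (\<Sum>i<n. res W i * p W a i * X(i,b)) else 0)"

lemma partial_L: assumes "b<d" shows "partial L a b W = G W a b"
proof -
  have "partial L a b W = C * (\<Sum>i<n. 2 * res W i * (if a < k then 2 * v a * p W a i * X(i,b) else 0))"
  proof -
    have W: "W(a := (W a)(b := W a b)) = W" by simp
    show ?thesis
    unfolding partial_def using DERIV_imp_deriv[OF dL[OF assms, of W a "W a b"]] unfolding W by simp
  qed
  also have "\<dots> = G W a b"
    by (auto simp: G_def sum_distrib_left intro!: sum.cong)
  finally show ?thesis .
qed

lemma dres: assumes "b<d"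
  shows "((\<lambda>t. res (W(a := (W a)(b := t))) i) has_real_derivative
     (if a < k then 2 * v a * p (W(a := (W a)(b := t0))) a i * X(i,b) else 0)) (at t0)"
  unfolding res_def using DERIV_diff[OF dq[OF assms] DERIV_const] by simp

definition "H W a b c g = (if a<k then 4 * C * v a * (\<Sum>i<n. ((if c<k then 2 * v c * p W c i * X(i,g) else 0) * p W a i + res W i * (if a = c then X(i,g) else 0)) * X(i,b)) else 0)"

lemma hess_L: assumes "b<d" "g<d" shows "hess L a b c g W = H W a b c g"
proof -
  have e: "(\<lambda>W'. partial L a b W') = (\<lambda>W'. G W' a b)" using partial_L[OF assms(1)] by auto
  have W: "W(c := (W c)(g := W c g)) = W" by simp
  show ?thesis
  proof (cases "a < k")
    case False
    then show ?thesis unfolding hess_def e partial_def by (simp add: G_def H_def)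
  next
    case True
    have "((\<lambda>t. G (W(c := (W c)(g := t))) a b) has_real_derivative
      4 * C * v a * (\<Sum>i<n. ((if c < k then 2 * v c * p (W(c := (W c)(g := W c g))) c i * X(i,g) else 0) * p (W(c := (W c)(g := W c g))) a i
         + (if a = c then X(i,g) else 0) * res (W(c := (W c)(g := W c g))) i) * X(i,b))) (at (W c g))"
      unfolding G_def using True
      by (simp only: if_True) (intro DERIV_cmult DERIV_sum DERIV_cmult_right DERIV_mult dres dp assms DERIV_const)
    then have "((\<lambda>t. G (W(c := (W c)(g := t))) a b) has_real_derivative H W a b c g) (at (W c g))"
      unfolding W by (rule DERIV_cong) (auto simp: H_def True algebra_simps intro!: sum.cong)
    then show ?thesis unfolding hess_def e partial_def by (rule DERIV_imp_deriv)
  qed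
qed

end


lemma sq_sum_prod: "(\<Sum>a\<in>A. \<Sum>b\<in>B. f a b::real)^2 = (\<Sum>a\<in>A. \<Sum>b\<in>B. \<Sum>c\<in>A. \<Sum>g\<in>B. f a b * f c g)"
  unfolding power2_eq_square by (simp only: sum_distrib_right) (simp only: sum_distrib_left)

lemma delta_part: assumes "finite A" "finite B"
  shows "(\<Sum>a\<in>A. \<Sum>b\<in>B. \<Sum>c\<in>A. \<Sum>g\<in>B. (if a = c then h a b c g else 0::real)) = (\<Sum>a\<in>A. \<Sum>b\<in>B. \<Sum>g\<in>B. h a b a g)"
proof -
  have "\<And>a b. a \<in> A \<Longrightarrow> (\<Sum>c\<in>A. \<Sum>g\<in>B. (if a = c then h a b c g else 0::real)) = (\<Sum>g\<in>B. h a b a g)"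
  proof -
    fix a b assume a: "a \<in> A"
    have "(\<Sum>c\<in>A. \<Sum>g\<in>B. (if a = c then h a b c g else 0::real)) = (\<Sum>c\<in>A. (if a = c then (\<Sum>g\<in>B. h a b a g) else 0))"
      by (intro sum.cong) auto
    also have "\<dots> = (\<Sum>g\<in>B. h a b a g)" using a assms by (simp add: sum.delta)
    finally show "(\<Sum>c\<in>A. \<Sum>g\<in>B. (if a = c then h a b c g else 0::real)) = (\<Sum>g\<in>B. h a b a g)" .
  qed
  then show ?thesis by (intro sum.cong) auto
qed

lemma quad_aux:
  fixes K r :: real and k d :: nat
  shows "(\<Sum>a<k. \<Sum>b<d. \<Sum>c<k. \<Sum>g<d. K * (2 * (f1 a b * f1 c g) + r * (if a = c then w a * (f2 a b * f2 c g) else 0)))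
   = K * (2 * (\<Sum>a<k. \<Sum>b<d. f1 a b)^2 + r * (\<Sum>a<k. w a * (\<Sum>b<d. f2 a b)^2))"
proof -
  have 1: "(\<Sum>a<k. w a * (\<Sum>b<d. f2 a b)^2) = (\<Sum>a<k. \<Sum>b<d. \<Sum>c<k. \<Sum>g<d. (if a = c then w a * (f2 a b * f2 c g) else 0))"
  proof -
    have "(\<Sum>a<k. \<Sum>b<d. \<Sum>c<k. \<Sum>g<d. (if a = c then w a * (f2 a b * f2 c g) else 0)) = (\<Sum>a<k. \<Sum>b<d. \<Sum>g<d. w a * (f2 a b * f2 a g))"
      using delta_part[of "{..<k}" "{..<d}" "\<lambda>a b c g. w a * (f2 a b * f2 c g)"] by simp
    also have "\<dots> = (\<Sum>a<k. w a * (\<Sum>b<d. f2 a b)^2)"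
      unfolding power2_eq_square sum_product by (simp add: sum_distrib_left mult_ac)
    finally show ?thesis by simp
  qed
  show ?thesis unfolding 1 sq_sum_prod
    by (simp add: sum.distrib sum_distrib_left algebra_simps)
qed



lemma swap4: "(\<Sum>a\<in>A. \<Sum>b\<in>B. \<Sum>c\<in>C. \<Sum>g\<in>D. \<Sum>i\<in>E. f a b c g i) = (\<Sum>i\<in>E. \<Sum>a\<in>A. \<Sum>b\<in>B. \<Sum>c\<in>C. \<Sum>g\<in>D. f a b c g i)"
  by (simp only: sum.swap[where B = E])

context LS begin

lemma hess_form_L: "hess_form k d L W U = 4 * C * (\<Sum>i<n. 2 * (\<Sum>a<k. \<Sum>b<d. U a b * v a * p W a i * X(i,b))^2
      + res W i * (\<Sum>a<k. v a * (\<Sum>b<d. U a b * X(i,b))^2))"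
proof -
  let ?f1 = "\<lambda>i a b. U a b * v a * p W a i * X(i,b)"
  let ?f2 = "\<lambda>i a b. U a b * X(i,b)"
  have tm: "U a b * hess L a b c g W * U c g = (\<Sum>i<n. 4 * C * (2 * (?f1 i a b * ?f1 i c g) + res W i * (if a = c then v a * (?f2 i a b * ?f2 i c g) else 0)))"
    if "a < k" "b < d" "c < k" "g < d" for a b c g
  proof -
    have "U a b * hess L a b c g W * U c g = U a b * H W a b c g * U c g" using that hess_L by simp
    also have "\<dots> = (\<Sum>i<n. U a b * (4 * C * v a * (((2 * v c * p W c i * X(i,g)) * p W a i + res W i * (if a = c then X(i,g) else 0)) * X(i,b))) * U c g)"
      using that by (simp add: H_def sum_distrib_left sum_distrib_right)
    also have "\<dots> = (\<Sum>i<n. 4 * C * (2 * (?f1 i a b * ?f1 i c g) + res W i * (if a = c then v a * (?f2 i a b * ?f2 i c g) else 0)))"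
      by (intro sum.cong refl) (auto simp: algebra_simps)
    finally show ?thesis .
  qed
  have "hess_form k d L W U = (\<Sum>a<k. \<Sum>b<d. \<Sum>c<k. \<Sum>g<d. \<Sum>i<n. 4 * C * (2 * (?f1 i a b * ?f1 i c g) + res W i * (if a = c then v a * (?f2 i a b * ?f2 i c g) else 0)))"
    unfolding hess_form_def by (intro sum.cong refl) (simp add: tm)
  also have "\<dots> = (\<Sum>i<n. \<Sum>a<k. \<Sum>b<d. \<Sum>c<k. \<Sum>g<d. 4 * C * (2 * (?f1 i a b * ?f1 i c g) + res W i * (if a = c then v a * (?f2 i a b * ?f2 i c g) else 0)))"
    by (rule swap4)
  also have "\<dots> = (\<Sum>i<n. 4 * C * (2 * (\<Sum>a<k. \<Sum>b<d. ?f1 i a b)^2 + res W i * (\<Sum>a<k. v a * (\<Sum>b<d. ?f2 i a b)^2)))"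
    by (intro sum.cong refl quad_aux)
  finally show ?thesis by (simp add: sum_distrib_left)
qed
end


lemma dep:
  fixes w :: "nat \<Rightarrow> nat \<Rightarrow> real"
  shows "finite S \<Longrightarrow> m < card S \<Longrightarrow> (\<forall>r\<in>S. \<forall>j\<ge>m. w r j = 0) \<Longrightarrow>
     \<exists>\<alpha>. (\<exists>r\<in>S. \<alpha> r \<noteq> 0) \<and> (\<forall>j. (\<Sum>r\<in>S. \<alpha> r * w r j) = 0)"
proof (induction m arbitrary: S w)
  case 0
  then obtain r where "r \<in> S" by fastforce
  then show ?case using 0 by (intro exI[of _ "\<lambda>_. 1"]) auto
next
  case (Suc m)
  show ?case
  proof (cases "\<forall>r\<in>S. w r m = 0")
    case True
    then have "\<forall>r\<in>S. \<forall>j\<ge>m. w r j = 0" using Suc.prems(3) by (metis Suc_leI le_neq_implies_less)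
    then show ?thesis using Suc.IH[of S w] Suc.prems by simp
  next
    case False
    then obtain pv where pv: "pv \<in> S" "w pv m \<noteq> 0" by blast
    define S' where "S' = S - {pv}"
    define w' where "w' r j = w r j - (w r m / w pv m) * w pv j" for r j
    have fS': "finite S'" using Suc.prems S'_def by simp
    have cS': "m < card S'" using Suc.prems pv by (simp add: S'_def)
    have sup: "\<forall>r\<in>S'. \<forall>j\<ge>m. w' r j = 0"
    proof (intro ballI allI impI)
      fix r j assume r: "r \<in> S'" and j: "m \<le> j"
      show "w' r j = 0"
      proof (cases "j = m")
        case True then show ?thesis using pv by (simp add: w'_def)
      next
        case False then have "Suc m \<le> j" using j by simp
        then show ?thesis using Suc.prems(3) r pv unfolding w'_def S'_def by auto
      qed
    qed
    obtain \<beta> where b1: "\<exists>r\<in>S'. \<beta> r \<noteq> 0" and b2: "\<forall>j. (\<Sum>r\<in>S'. \<beta> r * w' r j) = 0"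
      using Suc.IH[OF fS' cS' sup] by blast
    define \<alpha> where "\<alpha> r = (if r = pv then - (\<Sum>r\<in>S'. \<beta> r * w r m) / w pv m else \<beta> r)" for r
    have "\<exists>r\<in>S. \<alpha> r \<noteq> 0" using b1 by (auto simp: \<alpha>_def S'_def)
    moreover have "(\<Sum>r\<in>S. \<alpha> r * w r j) = 0" for j
    proof -
      have S: "S = insert pv S'" "pv \<notin> S'" using pv S'_def by auto
      have "(\<Sum>r\<in>S. \<alpha> r * w r j) = \<alpha> pv * w pv j + (\<Sum>r\<in>S'. \<beta> r * w r j)"
        using fS' S by (simp add: \<alpha>_def) (intro sum.cong, auto)
      also have "\<dots> = (\<Sum>r\<in>S'. \<beta> r * w' r j)"
        by (simp add: w'_def \<alpha>_def algebra_simps sum_subtractf sum_distrib_left sum_divide_distrib)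
      finally show ?thesis using b2 by simp
    qed
    ultimately show ?thesis by blast
  qed
qed

lemma dep_hyper:
  fixes w :: "nat \<Rightarrow> nat \<Rightarrow> real"
  assumes fS: "finite S" and cS: "d \<le> card S" and sup: "\<forall>r\<in>S. \<forall>j\<ge>d. w r j = 0"
    and pp: "pp < d" "u pp \<noteq> 0" and orth: "\<forall>r\<in>S. (\<Sum>j<d. w r j * u j) = 0"
  shows "\<exists>\<alpha>. (\<exists>r\<in>S. \<alpha> r \<noteq> 0) \<and> (\<forall>j<d. (\<Sum>r\<in>S. \<alpha> r * w r j) = 0)"
proof -
  define w' where "w' r j = (if j < pp then w r j else w r (Suc j))" for r j
  have sup': "\<forall>r\<in>S. \<forall>j\<ge>d - 1. w' r j = 0"
    using sup pp by (auto simp: w'_def)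
  have "d - 1 < card S" using cS pp by simp
  then obtain \<alpha> where a1: "\<exists>r\<in>S. \<alpha> r \<noteq> 0" and a2: "\<forall>j. (\<Sum>r\<in>S. \<alpha> r * w' r j) = 0"
    using dep[OF fS _ sup'] by blast
  define V where "V j = (\<Sum>r\<in>S. \<alpha> r * w r j)" for j
  have Vne: "V j = 0" if jp: "j \<noteq> pp" for j
  proof (cases "j < pp")
    case True
    then show ?thesis using a2[rule_format, of j] by (simp add: V_def w'_def)
  next
    case False
    then obtain j' where j': "j = Suc j'" "\<not> j' < pp" using jp False by (cases j) auto
    then show ?thesis using a2[rule_format, of j'] by (simp add: V_def w'_def)
  qed
  have "(\<Sum>j<d. V j * u j) = (\<Sum>r\<in>S. \<alpha> r * (\<Sum>j<d. w r j * u j))"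
    by (simp add: V_def sum_distrib_left sum_distrib_right mult_ac sum.swap[of _ "{..<d}"])
  also have "\<dots> = 0" using orth by simp
  finally have "(\<Sum>j<d. V j * u j) = 0" .
  moreover have "(\<Sum>j<d. V j * u j) = V pp * u pp"
    using pp Vne by (subst sum.remove[of _ pp]) auto
  ultimately have "V pp = 0" using pp by simp
  then have "\<forall>j<d. V j = 0" using Vne by metis
  then show ?thesis using a1 unfolding V_def by blast
qed



context LS begin

definition "stat W \<longleftrightarrow> (\<forall>a<k. v a \<noteq> 0 \<longrightarrow> (\<forall>b<d. (\<Sum>i<n. res W i * p W a i * X(i,b)) = 0))"
definition "Z z i = (\<Sum>j<d. z j * X(i,j))"
definition "Sset = {r. r < k \<and> v r \<noteq> 0}"

lemma stat_of_partials: assumes "n > 0" "\<forall>a<k. \<forall>b<d. partial L a b W = 0" shows "stat W"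
  unfolding stat_def
proof (intro allI impI)
  fix a b assume "a < k" "v a \<noteq> 0" "b < d"
  then have "G W a b = 0" using assms partial_L by auto
  moreover have "C > 0" using assms by (simp add: C_def)
  ultimately show "(\<Sum>i<n. res W i * p W a i * X(i,b)) = 0" using \<open>a<k\<close> \<open>v a \<noteq> 0\<close> by (simp add: G_def)
qed

lemma kernel:
  assumes st: "stat W" and cS: "d \<le> card Sset" and neg: "(\<Sum>i<n. res W i * (Z z i)^2) \<noteq> 0"
  shows "\<exists>\<alpha>. (\<forall>r. r \<notin> Sset \<longrightarrow> \<alpha> r = 0) \<and> (\<exists>r. \<alpha> r \<noteq> 0) \<and> (\<forall>j<d. (\<Sum>r<k. \<alpha> r * v r * W r j) = 0)"
proof -
  define u where "u j = (\<Sum>i<n. res W i * Z z i * X(i,j))" for j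
  have "(\<Sum>j<d. z j * u j) = (\<Sum>i<n. res W i * (Z z i)^2)"
  proof -
    have "(\<Sum>j<d. z j * u j) = (\<Sum>j<d. \<Sum>i<n. res W i * Z z i * (z j * X(i,j)))"
      by (simp add: u_def sum_distrib_left mult_ac)
    also have "\<dots> = (\<Sum>i<n. \<Sum>j<d. res W i * Z z i * (z j * X(i,j)))" by (rule sum.swap)
    also have "\<dots> = (\<Sum>i<n. res W i * (Z z i)^2)"
      by (intro sum.cong refl) (simp only: sum_distrib_left[symmetric] Z_def[symmetric] power2_eq_square mult.assoc)
    finally show ?thesis .
  qed
  then have "\<exists>pp<d. u pp \<noteq> 0" using neg by (metis (no_types, lifting) lessThan_iff mult_zero_right sum.neutral)
  then obtain pp where pp: "pp < d" "u pp \<noteq> 0" by blast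
  define w where "w r j = (if j < d then W r j else 0)" for r j
  have fS: "finite Sset" by (simp add: Sset_def)
  have orth: "\<forall>r\<in>Sset. (\<Sum>j<d. w r j * u j) = 0"
  proof
    fix r assume r: "r \<in> Sset"
    have e1: "(\<Sum>j<d. w r j * u j) = (\<Sum>i<n. res W i * Z z i * p W r i)"
    proof -
      have "(\<Sum>j<d. w r j * u j) = (\<Sum>j<d. \<Sum>i<n. res W i * Z z i * (W r j * X(i,j)))"
        by (simp add: w_def u_def sum_distrib_left mult_ac)
      also have "\<dots> = (\<Sum>i<n. \<Sum>j<d. res W i * Z z i * (W r j * X(i,j)))" by (rule sum.swap)
      also have "\<dots> = (\<Sum>i<n. res W i * Z z i * p W r i)" by (simp add: p_def sum_distrib_left)
      finally show ?thesis .
    qed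
    have e2: "(\<Sum>j'<d. z j' * (\<Sum>i<n. res W i * p W r i * X(i,j'))) = (\<Sum>i<n. res W i * Z z i * p W r i)"
    proof -
      have "(\<Sum>j'<d. z j' * (\<Sum>i<n. res W i * p W r i * X(i,j'))) = (\<Sum>j'<d. \<Sum>i<n. res W i * p W r i * (z j' * X(i,j')))"
        by (simp add: sum_distrib_left mult_ac)
      also have "\<dots> = (\<Sum>i<n. \<Sum>j'<d. res W i * p W r i * (z j' * X(i,j')))" by (rule sum.swap)
      also have "\<dots> = (\<Sum>i<n. res W i * Z z i * p W r i)" by (simp add: Z_def sum_distrib_left mult_ac)
      finally show ?thesis .
    qed
    have "(\<Sum>j<d. w r j * u j) = (\<Sum>j'<d. z j' * (\<Sum>i<n. res W i * p W r i * X(i,j')))"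
      using e1 e2 by simp
    also have "\<dots> = 0" using st r by (simp add: stat_def Sset_def)
    finally show "(\<Sum>j<d. w r j * u j) = 0" .
  qed
  obtain \<beta> where b1: "\<exists>r\<in>Sset. \<beta> r \<noteq> 0" and b2: "\<forall>j<d. (\<Sum>r\<in>Sset. \<beta> r * w r j) = 0"
    using dep_hyper[OF fS cS _ pp orth] by (auto simp: w_def)
  define \<alpha> where "\<alpha> r = (if r \<in> Sset then \<beta> r / v r else 0)" for r
  have "(\<Sum>r<k. \<alpha> r * v r * W r j) = 0" if j: "j < d" for j
  proof -
    have "(\<Sum>r<k. \<alpha> r * v r * W r j) = (\<Sum>r\<in>Sset. \<alpha> r * v r * W r j)"
      by (rule sum.mono_neutral_right) (auto simp: Sset_def \<alpha>_def)
    also have "\<dots> = (\<Sum>r\<in>Sset. \<beta> r * w r j)"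
      using j by (intro sum.cong) (auto simp: \<alpha>_def w_def Sset_def)
    finally show ?thesis using b2 j by simp
  qed
  moreover have "\<exists>r. \<alpha> r \<noteq> 0" using b1 by (auto simp: \<alpha>_def Sset_def)
  moreover have "\<forall>r. r \<notin> Sset \<longrightarrow> \<alpha> r = 0" by (simp add: \<alpha>_def)
  ultimately show ?thesis by blast
qed

lemma expansion:
  assumes ker: "\<forall>j<d. (\<Sum>r<k. \<alpha> r * v r * W r j) = 0"
  shows "L (\<lambda>r j. W r j + t * (\<alpha> r * z j)) = L W + C * (2 * t^2 * (\<Sum>r<k. v r * (\<alpha> r)^2) * (\<Sum>i<n. res W i * (Z z i)^2)
      + t^4 * (\<Sum>r<k. v r * (\<alpha> r)^2)^2 * (\<Sum>i<n. (Z z i)^4))"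
proof -
  define \<beta> where "\<beta> = (\<Sum>r<k. v r * (\<alpha> r)^2)"
  let ?W' = "\<lambda>r j. W r j + t * (\<alpha> r * z j)"
  have pW: "p ?W' r i = p W r i + t * \<alpha> r * Z z i" for r i
    by (simp add: p_def Z_def algebra_simps sum.distrib sum_distrib_left)
  have k0: "(\<Sum>r<k. v r * \<alpha> r * p W r i) = 0" for i
  proof -
    have "(\<Sum>r<k. v r * \<alpha> r * p W r i) = (\<Sum>j<d. (\<Sum>r<k. \<alpha> r * v r * W r j) * X(i,j))"
    proof -
      have "(\<Sum>r<k. v r * \<alpha> r * p W r i) = (\<Sum>r<k. \<Sum>j<d. \<alpha> r * v r * W r j * X(i,j))"
        by (simp add: p_def sum_distrib_left mult_ac)
      also have "\<dots> = (\<Sum>j<d. \<Sum>r<k. \<alpha> r * v r * W r j * X(i,j))" by (rule sum.swap)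
      also have "\<dots> = (\<Sum>j<d. (\<Sum>r<k. \<alpha> r * v r * W r j) * X(i,j))" by (simp add: sum_distrib_right)
      finally show ?thesis .
    qed
    also have "\<dots> = 0" using ker by simp
    finally show ?thesis .
  qed
  have qW: "q ?W' i = q W i + t^2 * \<beta> * (Z z i)^2" for i
  proof -
    have "q ?W' i = (\<Sum>r<k. v r * (p W r i)^2 + 2 * t * Z z i * (v r * \<alpha> r * p W r i) + t^2 * (Z z i)^2 * (v r * (\<alpha> r)^2))"
      unfolding q_def pW by (intro sum.cong) (auto simp: power2_eq_square algebra_simps)
    also have "\<dots> = q W i + 2 * t * Z z i * (\<Sum>r<k. v r * \<alpha> r * p W r i) + t^2 * (Z z i)^2 * \<beta>"
      by (simp add: q_def \<beta>_def sum.distrib sum_distrib_left)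
    finally show ?thesis using k0 by simp
  qed
  have rW: "res ?W' i = res W i + t^2 * \<beta> * (Z z i)^2" for i
    using qW by (simp add: res_def)
  have "L ?W' = C * (\<Sum>i<n. (res W i)^2 + 2 * t^2 * \<beta> * (res W i * (Z z i)^2) + t^4 * \<beta>^2 * (Z z i)^4)"
    unfolding L_eq rW by (intro arg_cong[where f="\<lambda>x. C * x"] sum.cong) (auto simp: power2_eq_square algebra_simps power4_eq_xxxx)
  also have "\<dots> = L W + C * (2 * t^2 * \<beta> * (\<Sum>i<n. res W i * (Z z i)^2) + t^4 * \<beta>^2 * (\<Sum>i<n. (Z z i)^4))"
    by (simp add: L_eq sum.distrib sum_distrib_left algebra_simps)
  finally show ?thesis by (simp add: \<beta>_def)
qed

end


lemma frob_upd: assumes "a < k" "b < d"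
  shows "frob2 k d (\<lambda>r j. (W(a := (W a)(b := t))) r j - W r j) = (t - W a b)^2"
proof -
  have "frob2 k d (\<lambda>r j. (W(a := (W a)(b := t))) r j - W r j) = (\<Sum>r<k. if r = a then (\<Sum>j<d. if j = b then (t - W a b)^2 else 0) else 0)"
    unfolding frob2_def
  proof (intro sum.cong refl)
    fix r show "(\<Sum>j<d. ((W(a := (W a)(b := t))) r j - W r j)^2) = (if r = a then (\<Sum>j<d. if j = b then (t - W a b)^2 else 0) else 0)"
    proof (cases "r = a")
      case True
      have "(\<Sum>j<d. ((W(a := (W a)(b := t))) r j - W r j)^2) = (\<Sum>j<d. if j = b then (t - W a b)^2 else 0)"
        using True by (intro sum.cong refl) auto
      then show ?thesis using True by simp
    qed auto
  qed
  also have "\<dots> = (t - W a b)^2" using assms by simp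
  finally show ?thesis .
qed

lemma matr_upd: "W \<in> matr k d \<Longrightarrow> a < k \<Longrightarrow> b < d \<Longrightarrow> W(a := (W a)(b := t)) \<in> matr k d"
  by (auto simp: matr_def)

context LS begin

lemma local_min_stationary: assumes "is_local_min k d L W" "a < k" "b < d" shows "partial L a b W = 0"
proof -
  obtain e where e: "e > 0" "\<forall>W'\<in>matr k d. frob2 k d (\<lambda>r j. W' r j - W r j) < e\<^sup>2 \<longrightarrow> L W \<le> L W'"
    and W: "W \<in> matr k d" using assms(1) unfolding is_local_min_def by blast
  have W0: "W(a := (W a)(b := W a b)) = W" by simp
  define D where "D = C * (\<Sum>i<n. 2 * res W i * (if a < k then 2 * v a * p W a i * X(i,b) else 0))"
  have der: "((\<lambda>t. L (W(a := (W a)(b := t)))) has_real_derivative D) (at (W a b))"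
    using dL[OF assms(3), of W a "W a b"] unfolding W0 D_def .
  have "\<forall>t. \<bar>W a b - t\<bar> < e \<longrightarrow> L (W(a := (W a)(b := W a b))) \<le> L (W(a := (W a)(b := t)))"
  proof (intro allI impI)
    fix t assume t: "\<bar>W a b - t\<bar> < e"
    have "\<bar>t - W a b\<bar> < e" using t by (simp add: abs_minus_commute)
    then have "\<bar>t - W a b\<bar>^2 < e^2" by (intro power_strict_mono) auto
    then have "(t - W a b)^2 < e^2" by simp
    then show "L (W(a := (W a)(b := W a b))) \<le> L (W(a := (W a)(b := t)))"
      using e(2) matr_upd[OF W assms(2,3)] frob_upd[OF assms(2,3)] W0 by simp
  qed
  then have "D = 0" using DERIV_local_min[OF der e(1)] by simp
  then show ?thesis unfolding partial_def using DERIV_imp_deriv[OF der] by simp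
qed

lemma global_of_psd:
  assumes st: "stat W" and s: "s = 1 \<or> s = -1" and sv: "\<forall>r<k. v r \<noteq> 0 \<longrightarrow> s * v r > 0"
    and psd: "\<forall>z. s * (\<Sum>i<n. res W i * (Z z i)^2) \<ge> 0"
  shows "L W \<le> L W'"
proof -
  have C0: "C \<ge> 0" by (simp add: C_def)
  have rq0: "(\<Sum>i<n. res W i * q W i) = 0"
  proof -
    have "(\<Sum>i<n. res W i * q W i) = (\<Sum>r<k. v r * (\<Sum>i<n. res W i * (p W r i)^2))"
    proof -
      have "(\<Sum>i<n. res W i * q W i) = (\<Sum>i<n. \<Sum>r<k. v r * (res W i * (p W r i)^2))"
        by (simp add: q_def sum_distrib_left mult_ac)
      also have "\<dots> = (\<Sum>r<k. \<Sum>i<n. v r * (res W i * (p W r i)^2))" by (rule sum.swap)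
      finally show ?thesis by (simp add: sum_distrib_left)
    qed
    also have "\<dots> = 0"
    proof (intro sum.neutral ballI)
      fix r assume r: "r \<in> {..<k}"
      show "v r * (\<Sum>i<n. res W i * (p W r i)^2) = 0"
      proof (cases "v r = 0")
        case False
        have "(\<Sum>i<n. res W i * (p W r i)^2) = (\<Sum>i<n. \<Sum>j<d. W r j * (res W i * p W r i * X(i,j)))"
          by (intro sum.cong refl) (simp add: power2_eq_square p_def[of W r] sum_distrib_left mult_ac)
        also have "\<dots> = (\<Sum>j<d. \<Sum>i<n. W r j * (res W i * p W r i * X(i,j)))" by (rule sum.swap)
        also have "\<dots> = (\<Sum>j<d. W r j * (\<Sum>i<n. res W i * p W r i * X(i,j)))" by (simp add: sum_distrib_left)
        also have "\<dots> = 0" using st r False by (simp add: stat_def)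
        finally show ?thesis by simp
      qed simp
    qed
    finally show ?thesis .
  qed
  have rq': "(\<Sum>i<n. res W i * q W' i) \<ge> 0"
  proof -
    have "(\<Sum>i<n. res W i * q W' i) = (\<Sum>r<k. v r * (\<Sum>i<n. res W i * (Z (W' r) i)^2))"
    proof -
      have pz: "p W' r i = Z (W' r) i" for r i by (simp add: p_def Z_def)
      have "(\<Sum>i<n. res W i * q W' i) = (\<Sum>i<n. \<Sum>r<k. v r * (res W i * (Z (W' r) i)^2))"
        by (simp add: q_def pz sum_distrib_left mult_ac)
      also have "\<dots> = (\<Sum>r<k. \<Sum>i<n. v r * (res W i * (Z (W' r) i)^2))" by (rule sum.swap)
      finally show ?thesis by (simp add: sum_distrib_left)
    qed
    also have "\<dots> \<ge> 0"
    proof (intro sum_nonneg)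
      fix r assume r: "r \<in> {..<k}"
      have "(s * v r) * (s * (\<Sum>i<n. res W i * (Z (W' r) i)^2)) \<ge> 0"
      proof (cases "v r = 0")
        case False
        then have "s * v r > 0" using sv r by auto
        moreover have "s * (\<Sum>i<n. res W i * (Z (W' r) i)^2) \<ge> 0" using psd by blast
        ultimately show ?thesis by simp
      qed simp
      moreover have "s * s = 1" using s by auto
      ultimately show "v r * (\<Sum>i<n. res W i * (Z (W' r) i)^2) \<ge> 0"
        by (metis (no_types, lifting) mult.assoc mult.left_commute mult_1)
    qed
    finally show ?thesis .
  qed
  have "(\<Sum>i<n. (res W i)^2) + 2 * (\<Sum>i<n. res W i * (res W' i - res W i)) \<le> (\<Sum>i<n. (res W' i)^2)"
  proof -
    have "(\<Sum>i<n. (res W i)^2 + 2 * (res W i * (res W' i - res W i))) \<le> (\<Sum>i<n. (res W' i)^2)"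
    proof (rule sum_mono)
      fix i
      have "0 \<le> (res W' i - res W i)^2" by simp
      then show "(res W i)^2 + 2 * (res W i * (res W' i - res W i)) \<le> (res W' i)^2"
        by (simp add: power2_eq_square algebra_simps)
    qed
    then show ?thesis by (simp add: sum.distrib sum_distrib_left)
  qed
  moreover have "(\<Sum>i<n. res W i * (res W' i - res W i)) = (\<Sum>i<n. res W i * q W' i) - (\<Sum>i<n. res W i * q W i)"
  proof -
    have "res W i * (res W' i - res W i) = res W i * q W' i - res W i * q W i" for i
      by (simp add: res_def algebra_simps)
    then show ?thesis by (simp add: sum_subtractf)
  qed
  ultimately have "(\<Sum>i<n. (res W i)^2) \<le> (\<Sum>i<n. (res W' i)^2)" using rq0 rq' by linarith
  then show ?thesis unfolding L_eq using C0 by (simp add: mult_left_mono)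
qed

end


context LS begin

lemma ker_p: assumes ker: "\<forall>j<d. (\<Sum>r<k. \<alpha> r * v r * W r j) = 0"
  shows "(\<Sum>r<k. \<alpha> r * v r * p W r i) = 0"
proof -
  have "(\<Sum>r<k. \<alpha> r * v r * p W r i) = (\<Sum>r<k. \<Sum>j<d. \<alpha> r * v r * W r j * X(i,j))"
    by (simp add: p_def sum_distrib_left mult_ac)
  also have "\<dots> = (\<Sum>j<d. \<Sum>r<k. \<alpha> r * v r * W r j * X(i,j))" by (rule sum.swap)
  also have "\<dots> = (\<Sum>j<d. (\<Sum>r<k. \<alpha> r * v r * W r j) * X(i,j))" by (simp add: sum_distrib_right)
  finally show ?thesis using ker by simp
qed

lemma Z_restrict: "Z (\<lambda>j. if j < d then z j else 0) i = Z z i"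
  by (simp add: Z_def)

lemma beta_pos:
  assumes s: "s = 1 \<or> s = -1" and sv: "\<forall>r<k. v r \<noteq> 0 \<longrightarrow> s * v r > 0"
    and a1: "\<forall>r. r \<notin> Sset \<longrightarrow> \<alpha> r = 0" and a2: "\<exists>r. \<alpha> r \<noteq> 0"
  shows "s * (\<Sum>r<k. v r * (\<alpha> r)^2) > 0"
proof -
  obtain r0 where r0: "\<alpha> r0 \<noteq> 0" using a2 by blast
  then have r0S: "r0 \<in> Sset" using a1 by blast
  have "s * (\<Sum>r<k. v r * (\<alpha> r)^2) = (\<Sum>r<k. (s * v r) * (\<alpha> r)^2)" by (simp add: sum_distrib_left mult_ac)
  also have "\<dots> > 0"
  proof (rule sum_pos2[of _ r0])
    show "r0 \<in> {..<k}" using r0S by (simp add: Sset_def)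
    show "0 < s * v r0 * (\<alpha> r0)^2" using r0S sv r0 by (simp add: Sset_def)
    show "0 \<le> s * v i * (\<alpha> i)^2" if "i \<in> {..<k}" for i
      using sv that by (cases "v i = 0") (auto intro: less_imp_le)
  qed simp
  finally show ?thesis .
qed

lemma sign_prod: assumes s: "s = 1 \<or> s = -1" and "s * xx > 0" "s * yy < (0::real)" shows "xx * yy < 0"
proof (cases "s = 1")
  case True then show ?thesis using assms by (simp add: mult_pos_neg)
next
  case False then have "s = -1" using s by simp
  then have "xx < 0" "yy > 0" using assms by auto
  then show ?thesis by (simp add: mult_neg_pos)
qed

lemma local_min_psd:
  assumes lm: "is_local_min k d L W" and n0: "n > 0" and cS: "d \<le> card Sset"
    and s: "s = 1 \<or> s = -1" and sv: "\<forall>r<k. v r \<noteq> 0 \<longrightarrow> s * v r > 0"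
  shows "\<forall>z. s * (\<Sum>i<n. res W i * (Z z i)^2) \<ge> 0"
proof (rule ccontr)
  assume "\<not> ?thesis"
  then obtain z where zneg: "s * (\<Sum>i<n. res W i * (Z z i)^2) < 0" by (auto simp: not_le)
  define S where "S = (\<Sum>i<n. res W i * (Z z i)^2)"
  have st: "stat W" using stat_of_partials[OF n0] local_min_stationary[OF lm] by blast
  have "S \<noteq> 0" using zneg by (auto simp: S_def)
  then obtain \<alpha> where a1: "\<forall>r. r \<notin> Sset \<longrightarrow> \<alpha> r = 0" and a2: "\<exists>r. \<alpha> r \<noteq> 0"
      and ker: "\<forall>j<d. (\<Sum>r<k. \<alpha> r * v r * W r j) = 0"
    using kernel[OF st cS] unfolding S_def by blast
  define z' where "z' j = (if j < d then z j else 0)" for j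
  have Zz: "Z z' i = Z z i" for i unfolding z'_def by (rule Z_restrict)
  define \<beta> where "\<beta> = (\<Sum>r<k. v r * (\<alpha> r)^2)"
  have sb: "s * \<beta> > 0" unfolding \<beta>_def by (rule beta_pos[OF s sv a1 a2])
  define Q where "Q = \<beta> * S"
  have Q: "Q < 0" unfolding Q_def using sign_prod[OF s sb] zneg S_def by simp
  define S4 where "S4 = (\<Sum>i<n. (Z z i)^4)"
  define B2 where "B2 = \<beta>^2 * S4"
  have B2: "B2 \<ge> 0" unfolding B2_def S4_def by (simp add: sum_nonneg)
  define F where "F = (\<Sum>r<k. \<Sum>j<d. (\<alpha> r * z' j)^2)"
  have F: "F \<ge> 0" unfolding F_def by (simp add: sum_nonneg)
  obtain e where e: "e > 0" "\<forall>W'\<in>matr k d. frob2 k d (\<lambda>r j. W' r j - W r j) < e\<^sup>2 \<longrightarrow> L W \<le> L W'"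
    and W: "W \<in> matr k d" using lm unfolding is_local_min_def by blast
  define T where "T = min (e^2 / (F + 1)) (- Q / (B2 + 1))"
  have "- Q / (B2 + 1) > 0" using Q B2 by (intro divide_pos_pos) auto
  moreover have "e^2 / (F + 1) > 0" using e F by (intro divide_pos_pos) auto
  ultimately have T0: "T > 0" unfolding T_def by simp
  have T1: "T * F < e^2"
  proof -
    have "T * F \<le> e^2 / (F + 1) * F" unfolding T_def using F by (intro mult_right_mono) auto
    also have "\<dots> < e^2" using F e by (simp add: field_simps)
    finally show ?thesis .
  qed
  have T2: "T * B2 < - Q"
  proof -
    have "T * B2 \<le> - Q / (B2 + 1) * B2" unfolding T_def using B2 by (intro mult_right_mono) auto
    also have "\<dots> < - Q" using B2 Q by (simp add: field_simps)
    finally show ?thesis .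
  qed
  define t where "t = sqrt T"
  have t2: "t^2 = T" using T0 by (simp add: t_def)
  have t4: "t^4 = T^2" using t2 by (metis power2_eq_square power4_eq_xxxx mult.assoc)
  define W' where "W' = (\<lambda>r j. W r j + t * (\<alpha> r * z' j))"
  have W'm: "W' \<in> matr k d"
    using W a1 unfolding matr_def W'_def z'_def Sset_def by auto
  have "frob2 k d (\<lambda>r j. W' r j - W r j) = T * F"
    unfolding frob2_def F_def W'_def using t2 by (simp add: sum_distrib_left power_mult_distrib)
  then have "L W \<le> L W'" using e W'm T1 by simp
  moreover have "L W' = L W + C * (T * (2 * Q + T * B2))"
    unfolding W'_def expansion[OF ker] Zz t2 t4
    by (simp add: Q_def B2_def S_def S4_def \<beta>_def algebra_simps power2_eq_square)
  moreover have "C * (T * (2 * Q + T * B2)) < 0"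
    using T0 T2 Q n0 by (intro mult_pos_neg) (auto simp: C_def intro: mult_pos_neg)
  ultimately show False by simp
qed

lemma saddle_neg:
  assumes sd: "is_saddle k d L W" and n0: "n > 0" and cS: "d \<le> card Sset"
    and s: "s = 1 \<or> s = -1" and sv: "\<forall>r<k. v r \<noteq> 0 \<longrightarrow> s * v r > 0"
  shows "\<exists>U\<in>matr k d. hess_form k d L W U < 0"
proof -
  have W: "W \<in> matr k d" and part: "\<forall>a<k. \<forall>b<d. partial L a b W = 0" and nlm: "\<not> is_local_min k d L W"
    using sd unfolding is_saddle_def is_stationary_def by auto
  have st: "stat W" using stat_of_partials[OF n0 part] .
  have "\<not> (\<forall>z. s * (\<Sum>i<n. res W i * (Z z i)^2) \<ge> 0)"
  proof
    assume psd: "\<forall>z. s * (\<Sum>i<n. res W i * (Z z i)^2) \<ge> 0"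
    have "\<forall>W'. L W \<le> L W'" using global_of_psd[OF st s sv psd] by blast
    then have "is_local_min k d L W" unfolding is_local_min_def using W by (auto intro: exI[of _ 1])
    then show False using nlm by simp
  qed
  then obtain z where zneg: "s * (\<Sum>i<n. res W i * (Z z i)^2) < 0" by (auto simp: not_le)
  define S where "S = (\<Sum>i<n. res W i * (Z z i)^2)"
  have "S \<noteq> 0" using zneg by (auto simp: S_def)
  then obtain \<alpha> where a1: "\<forall>r. r \<notin> Sset \<longrightarrow> \<alpha> r = 0" and a2: "\<exists>r. \<alpha> r \<noteq> 0"
      and ker: "\<forall>j<d. (\<Sum>r<k. \<alpha> r * v r * W r j) = 0"
    using kernel[OF st cS] unfolding S_def by blast
  define z' where "z' j = (if j < d then z j else 0)" for j
  have Zz: "Z z' i = Z z i" for i unfolding z'_def by (rule Z_restrict)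
  define \<beta> where "\<beta> = (\<Sum>r<k. v r * (\<alpha> r)^2)"
  have sb: "s * \<beta> > 0" unfolding \<beta>_def by (rule beta_pos[OF s sv a1 a2])
  have Q: "\<beta> * S < 0" using sign_prod[OF s sb] zneg S_def by simp
  define U where "U = (\<lambda>r j. \<alpha> r * z' j)"
  have Um: "U \<in> matr k d" using a1 unfolding matr_def U_def z'_def Sset_def by auto
  have t1: "(\<Sum>a<k. \<Sum>b<d. U a b * v a * p W a i * X(i,b)) = 0" for i
  proof -
    have "(\<Sum>a<k. \<Sum>b<d. U a b * v a * p W a i * X(i,b)) = (\<Sum>a<k. \<alpha> a * v a * p W a i * Z z' i)"
      by (simp add: U_def Z_def sum_distrib_left mult_ac)
    also have "\<dots> = (\<Sum>a<k. \<alpha> a * v a * p W a i) * Z z' i" by (simp add: sum_distrib_right)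
    finally show ?thesis using ker_p[OF ker] by simp
  qed
  have t2: "(\<Sum>a<k. v a * (\<Sum>b<d. U a b * X(i,b))^2) = \<beta> * (Z z i)^2" for i
  proof -
    have "(\<Sum>a<k. v a * (\<Sum>b<d. U a b * X(i,b))^2) = (\<Sum>a<k. v a * (\<alpha> a * Z z' i)^2)"
      by (simp add: U_def Z_def sum_distrib_left mult_ac)
    also have "\<dots> = \<beta> * (Z z i)^2" by (simp add: Zz \<beta>_def sum_distrib_left power_mult_distrib mult_ac)
    finally show ?thesis .
  qed
  have "hess_form k d L W U = 4 * C * (\<beta> * S)"
    unfolding hess_form_L t1 t2 by (simp add: S_def sum_distrib_left mult_ac)
  also have "\<dots> < 0"
  proof -
    have "4 * C > 0" using n0 by (simp add: C_def)
    then show ?thesis using mult_pos_neg[OF _ Q] by blast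
  qed
  finally show ?thesis using Um by blast
qed

end


lemma sos:
  fixes c :: "nat \<Rightarrow> real" and D :: nat
  shows "m \<le> D \<Longrightarrow> finite R \<Longrightarrow> (\<forall>r\<in>R. c r \<ge> 0) \<Longrightarrow> (\<forall>r\<in>R. \<forall>j\<ge>m. l r j = 0) \<Longrightarrow>
    \<exists>u. (\<forall>i j. m \<le> j \<longrightarrow> u i j = 0) \<and>
        (\<forall>x. (\<Sum>r\<in>R. c r * (\<Sum>j<D. l r j * x j)^2) = (\<Sum>i<m. (\<Sum>j<D. u i j * x j)^2))"
proof (induction m arbitrary: l)
  case 0
  then show ?case by (intro exI[of _ "\<lambda>i j. 0"]) auto
next
  case (Suc m)
  define a where "a = (\<Sum>r\<in>R. c r * (l r m)^2)"
  have a0: "a \<ge> 0" unfolding a_def using Suc.prems by (intro sum_nonneg) auto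
  define \<mu> where "\<mu> j = (if a = 0 then (if j = m then 1 else 0) else (\<Sum>r\<in>R. c r * l r m * l r j) / a)" for j
  define \<nu> where "\<nu> r j = l r j - l r m * \<mu> j" for r j
  have mum: "\<mu> m = 1" unfolding \<mu>_def a_def by (simp add: power2_eq_square mult.assoc)
  have mub: "\<mu> j = 0" if "j > m" for j
    using that Suc.prems(4) unfolding \<mu>_def by auto
  have nusup: "\<forall>r\<in>R. \<forall>j\<ge>m. \<nu> r j = 0"
  proof (intro ballI allI impI)
    fix r j assume r: "r \<in> R" and j: "m \<le> j"
    show "\<nu> r j = 0"
    proof (cases "j = m")
      case True then show ?thesis by (simp add: \<nu>_def mum)
    next
      case False then have "j > m" using j by simp
      then show ?thesis using Suc.prems(4) r mub by (simp add: \<nu>_def)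
    qed
  qed
  obtain u' where u'1: "\<forall>i j. m \<le> j \<longrightarrow> u' i j = 0"
    and u'2: "\<forall>x. (\<Sum>r\<in>R. c r * (\<Sum>j<D. \<nu> r j * x j)^2) = (\<Sum>i<m. (\<Sum>j<D. u' i j * x j)^2)"
    using Suc.IH[of \<nu>] Suc.prems nusup by auto
  define u where "u i j = (if i = m then sqrt a * \<mu> j else u' i j)" for i j
  have "\<forall>i j. Suc m \<le> j \<longrightarrow> u i j = 0" using u'1 mub by (auto simp: u_def)
  moreover have "(\<Sum>r\<in>R. c r * (\<Sum>j<D. l r j * x j)^2) = (\<Sum>i<Suc m. (\<Sum>j<D. u i j * x j)^2)" for x
  proof -
    define Mx where "Mx = (\<Sum>j<D. \<mu> j * x j)"
    define Lx where "Lx r = (\<Sum>j<D. l r j * x j)" for r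
    define Nx where "Nx r = (\<Sum>j<D. \<nu> r j * x j)" for r
    have NL: "Nx r = Lx r - l r m * Mx" for r
      by (simp add: Nx_def Lx_def Mx_def \<nu>_def algebra_simps sum_subtractf sum_distrib_left)
    have cross: "(\<Sum>r\<in>R. c r * l r m * Nx r) = 0"
    proof (cases "a = 0")
      case True
      have "c r * l r m = 0" if r: "r \<in> R" for r
      proof -
        have "c r * (l r m)^2 = 0"
          using True Suc.prems(2,3) r unfolding a_def by (subst (asm) sum_nonneg_eq_0_iff) auto
        then show ?thesis by (auto simp: power2_eq_square)
      qed
      then show ?thesis by (intro sum.neutral) auto
    next
      case False
      have "Mx = (\<Sum>j<D. (\<Sum>r\<in>R. c r * l r m * l r j) / a * x j)" using False by (simp add: Mx_def \<mu>_def)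
      also have "\<dots> = (\<Sum>j<D. \<Sum>r\<in>R. c r * l r m * (l r j * x j)) / a"
        by (simp add: sum_divide_distrib[symmetric] sum_distrib_right sum_distrib_left mult_ac)
      also have "\<dots> = (\<Sum>r\<in>R. \<Sum>j<D. c r * l r m * (l r j * x j)) / a" by (subst sum.swap) simp
      also have "\<dots> = (\<Sum>r\<in>R. c r * l r m * Lx r) / a" by (simp add: Lx_def sum_distrib_left)
      finally have M: "a * Mx = (\<Sum>r\<in>R. c r * l r m * Lx r)" using False by simp
      have "(\<Sum>r\<in>R. c r * l r m * Nx r) = (\<Sum>r\<in>R. c r * l r m * Lx r) - (\<Sum>r\<in>R. c r * (l r m)^2) * Mx"
        by (simp add: NL algebra_simps sum_subtractf sum_distrib_right sum_distrib_left power2_eq_square)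
      then show ?thesis using M by (simp add: a_def[symmetric] mult.commute)
    qed
    have "(\<Sum>r\<in>R. c r * (Lx r)^2) = (\<Sum>r\<in>R. c r * (l r m)^2 * Mx^2 + 2 * Mx * (c r * l r m * Nx r) + c r * (Nx r)^2)"
      by (intro sum.cong refl) (simp add: NL power2_eq_square algebra_simps)
    also have "\<dots> = a * Mx^2 + 2 * Mx * (\<Sum>r\<in>R. c r * l r m * Nx r) + (\<Sum>r\<in>R. c r * (Nx r)^2)"
      by (simp add: sum.distrib a_def sum_distrib_left sum_distrib_right)
    also have "\<dots> = (sqrt a * Mx)^2 + (\<Sum>i<m. (\<Sum>j<D. u' i j * x j)^2)"
      using cross u'2 a0 by (simp add: Nx_def power_mult_distrib)
    also have "\<dots> = (\<Sum>i<Suc m. (\<Sum>j<D. u i j * x j)^2)"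
      by (simp add: u_def Mx_def sum_distrib_left mult_ac)
    finally show ?thesis by (simp add: Lx_def)
  qed
  ultimately show ?case by blast
qed



context LS begin

lemma L_nonneg: "L W \<ge> 0"
  unfolding L_eq C_def by (intro mult_nonneg_nonneg sum_nonneg) auto

lemma zero_loss:
  assumes Wsm: "Ws \<in> matr k d" and s: "s = 1 \<or> s = -1" and svs: "\<forall>r<k. vs r \<noteq> 0 \<longrightarrow> s * vs r > 0"
    and sv: "\<forall>r<k. v r \<noteq> 0 \<longrightarrow> s * v r > 0" and cS: "d \<le> card Sset"
  shows "\<exists>W0\<in>matr k d. L W0 = 0"
proof -
  have ss: "s * s = 1" using s by auto
  have "\<exists>u. (\<forall>i j. d \<le> j \<longrightarrow> u i j = 0) \<and>
        (\<forall>x. (\<Sum>r\<in>{..<k}. (s * vs r) * (\<Sum>j<d. Ws r j * x j)^2) = (\<Sum>i<d. (\<Sum>j<d. u i j * x j)^2))"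
  proof (rule sos)
    show "\<forall>r\<in>{..<k}. 0 \<le> s * vs r" using svs by (auto intro: less_imp_le)
    show "\<forall>r\<in>{..<k}. \<forall>j\<ge>d. Ws r j = 0" using Wsm by (auto simp: matr_def)
  qed auto
  then obtain u where u1: "\<forall>i j. d \<le> j \<longrightarrow> u i j = 0"
    and u2: "\<forall>x. (\<Sum>r\<in>{..<k}. (s * vs r) * (\<Sum>j<d. Ws r j * x j)^2) = (\<Sum>i<d. (\<Sum>j<d. u i j * x j)^2)" by blast
  obtain T where T: "T \<subseteq> Sset" "card T = d" "finite T" using obtain_subset_with_card_n[OF cS] by blast
  obtain h where h: "bij_betw h {0..<card T} T" using ex_bij_betw_nat_finite[OF T(3)] by blast
  then have h': "bij_betw h {..<d} T" using T(2) by (simp add: atLeast0LessThan)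
  define g where "g r = inv_into {..<d} h r" for r
  define W0 where "W0 r j = (if r \<in> T then u (g r) j / sqrt (s * v r) else 0)" for r j
  have TS: "r \<in> T \<Longrightarrow> r < k \<and> v r \<noteq> 0" for r using T(1) by (auto simp: Sset_def)
  have W0m: "W0 \<in> matr k d" unfolding matr_def mem_Collect_eq
  proof (intro allI impI)
    fix r j assume "k \<le> r \<or> d \<le> j"
    then show "W0 r j = 0" using TS[of r] u1 by (auto simp: W0_def)
  qed
  define U where "U i ii = (\<Sum>j<d. u i j * X(ii,j))" for i ii
  have yq: "q W0 ii = y ii" for ii
  proof -
    have "q W0 ii = (\<Sum>r\<in>T. v r * (p W0 r ii)^2)"
      unfolding q_def by (rule sum.mono_neutral_right) (use TS in \<open>auto simp: W0_def p_def\<close>)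
    also have "\<dots> = (\<Sum>r\<in>T. s * (U (g r) ii)^2)"
    proof (intro sum.cong refl)
      fix r assume r: "r \<in> T"
      have pos: "s * v r > 0" using sv TS[OF r] by auto
      have "p W0 r ii = U (g r) ii / sqrt (s * v r)"
        using r by (simp add: p_def W0_def U_def sum_divide_distrib)
      then have "v r * (p W0 r ii)^2 = v r * (U (g r) ii)^2 / (s * v r)"
        using pos by (simp add: power_divide)
      also have "\<dots> = (U (g r) ii)^2 / s"
      proof -
        have vne: "v r \<noteq> 0" using pos by auto
        show ?thesis using vne by (simp add: mult.commute[of s])
      qed
      also have "\<dots> = s * (U (g r) ii)^2" using s by auto
      finally show "v r * (p W0 r ii)^2 = s * (U (g r) ii)^2" .
    qed
    also have "\<dots> = (\<Sum>i<d. s * (U (g (h i)) ii)^2)"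
      using sum.reindex_bij_betw[OF h', of "\<lambda>r. s * (U (g r) ii)^2"] by simp
    also have "\<dots> = (\<Sum>i<d. s * (U i ii)^2)"
      using h' unfolding g_def bij_betw_def by (intro sum.cong refl) (simp add: inv_into_f_f)
    also have "\<dots> = s * (\<Sum>r\<in>{..<k}. (s * vs r) * (\<Sum>j<d. Ws r j * X(ii,j))^2)"
      using u2[rule_format, of "\<lambda>j. X(ii,j)"] by (simp add: U_def sum_distrib_left)
    also have "\<dots> = y ii"
      by (simp add: y_def label_def sum_distrib_left mult.assoc[symmetric] ss)
    finally show ?thesis .
  qed
  have "L W0 = 0" unfolding L_eq res_def yq by simp
  then show ?thesis using W0m by blast
qed

end

theorem main_thm:
  "\<exists>c::real. c > 0 \<and>
    (\<forall>(k::nat) (d::nat) (n::nat) Ws (vs::nat \<Rightarrow> real) (v::nat \<Rightarrow> real) (s::real).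
      d \<le> k \<longrightarrow> Ws \<in> matr k d \<longrightarrow> sigma_min k d Ws > 0 \<longrightarrow>
      (s = 1 \<or> s = -1) \<longrightarrow>
      (\<forall>r<k. vs r \<noteq> 0 \<longrightarrow> s * vs r > 0) \<longrightarrow>
      (\<forall>r<k. v r \<noteq> 0 \<longrightarrow> s * v r > 0) \<longrightarrow>
      card {r. r < k \<and> v r \<noteq> 0} \<ge> d \<longrightarrow>
      real d \<le> real n \<longrightarrow> real n \<le> c * (real d)\<^sup>2 \<longrightarrow>
      (AE X in PiM ({..<n} \<times> {..<d}) (\<lambda>_. lborel).
         (\<forall>W. is_local_min k d (loss k d n vs Ws v X) W \<longrightarrow>
                is_global_min k d (loss k d n vs Ws v X) W) \<and>
         (\<forall>W. is_saddle k d (loss k d n vs Ws v X) W \<longrightarrow>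
                (\<exists>U\<in>matr k d. hess_form k d (loss k d n vs Ws v X) W U < 0)) \<and>
         (\<exists>W. is_global_min k d (loss k d n vs Ws v X) W \<and>
                loss k d n vs Ws v X W = 0)))"
proof (intro exI[of _ 1] conjI allI impI)
  fix k d n :: nat and Ws and vs v :: "nat \<Rightarrow> real" and s :: real
  assume Wsm: "Ws \<in> matr k d" and s: "s = 1 \<or> s = -1" and svs: "\<forall>r<k. vs r \<noteq> 0 \<longrightarrow> s * vs r > 0"
    and sv: "\<forall>r<k. v r \<noteq> 0 \<longrightarrow> s * v r > 0" and cS0: "card {r. r < k \<and> v r \<noteq> 0} \<ge> d"
  show "AE X in PiM ({..<n} \<times> {..<d}) (\<lambda>_. lborel).
         (\<forall>W. is_local_min k d (loss k d n vs Ws v X) W \<longrightarrow>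
                is_global_min k d (loss k d n vs Ws v X) W) \<and>
         (\<forall>W. is_saddle k d (loss k d n vs Ws v X) W \<longrightarrow>
                (\<exists>U\<in>matr k d. hess_form k d (loss k d n vs Ws v X) W U < 0)) \<and>
         (\<exists>W. is_global_min k d (loss k d n vs Ws v X) W \<and>
                loss k d n vs Ws v X W = 0)"
  proof (rule AE_I2)
    fix X
    interpret LS k d n vs Ws v X .
    have cS: "d \<le> card Sset" using cS0 by (simp add: Sset_def)
    obtain W0 where W0: "W0 \<in> matr k d" "L W0 = 0" using zero_loss[OF Wsm s svs sv cS] by blast
    have iii: "\<exists>W. is_global_min k d L W \<and> L W = 0"
      using W0 L_nonneg unfolding is_global_min_def by auto
    show "(\<forall>W. is_local_min k d L W \<longrightarrow> is_global_min k d L W) \<and>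
         (\<forall>W. is_saddle k d L W \<longrightarrow> (\<exists>U\<in>matr k d. hess_form k d L W U < 0)) \<and>
         (\<exists>W. is_global_min k d L W \<and> L W = 0)"
    proof (cases "n = 0")
      case True
      have L0: "L W = 0" for W unfolding L_eq using True by simp
      have lm: "is_local_min k d L W" if "W \<in> matr k d" for W
        using that unfolding is_local_min_def L0 by (auto intro: exI[of _ 1])
      have i: "is_global_min k d L W" if "is_local_min k d L W" for W
        using that unfolding is_global_min_def is_local_min_def by (simp add: L0)
      have ii: "False" if "is_saddle k d L W" for W
        using that lm unfolding is_saddle_def is_stationary_def by blast
      show ?thesis using i ii iii by blast
    next
      case False
      then have n0: "n > 0" by simp
      have i: "is_global_min k d L W" if lm: "is_local_min k d L W" for W
      proof -
        have st: "stat W" using stat_of_partials[OF n0] local_min_stationary[OF lm] by blast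
        have psd: "\<forall>z. s * (\<Sum>i<n. res W i * (Z z i)^2) \<ge> 0" using local_min_psd[OF lm n0 cS s sv] .
        show ?thesis using global_of_psd[OF st s sv psd] lm unfolding is_global_min_def is_local_min_def by blast
      qed
      show ?thesis using i saddle_neg[OF _ n0 cS s sv] iii by blast
    qed
  qed
qed simp


theorem theorem2p2:
  "\<exists>c::real. c > 0 \<and>
    (\<forall>(k::nat) (d::nat) (n::nat) Ws (vs::nat \<Rightarrow> real) (v::nat \<Rightarrow> real) (s::real).
      d \<le> k \<longrightarrow> Ws \<in> matr k d \<longrightarrow> sigma_min k d Ws > 0 \<longrightarrow>
      (s = 1 \<or> s = -1) \<longrightarrow>
      (\<forall>r<k. vs r \<noteq> 0 \<longrightarrow> s * vs r > 0) \<longrightarrow>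
      (\<forall>r<k. v r \<noteq> 0 \<longrightarrow> s * v r > 0) \<longrightarrow>
      card {r. r < k \<and> v r \<noteq> 0} \<ge> d \<longrightarrow>
      real d \<le> real n \<longrightarrow> real n \<le> c * (real d)\<^sup>2 \<longrightarrow>
      (AE X in PiM ({..<n} \<times> {..<d}) (\<lambda>_. lborel).
         (\<forall>W. is_local_min k d (loss k d n vs Ws v X) W \<longrightarrow>
                is_global_min k d (loss k d n vs Ws v X) W) \<and>
         (\<forall>W. is_saddle k d (loss k d n vs Ws v X) W \<longrightarrow>
                (\<exists>U\<in>matr k d. hess_form k d (loss k d n vs Ws v X) W U < 0)) \<and>
         (\<exists>W. is_global_min k d (loss k d n vs Ws v X) W \<and>
                loss k d n vs Ws v X W = 0)))"
    by (rule main_thm)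

end
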